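(* The set of Lebesgue integrable functions on $[0,1]$ which are not equivalent (equal almost everywhere) to a Riemann integrable function on any nondegenerate subinterval of $[0,1]$ is strongly $\mathfrak{c}$-algebrable (with respect to pointwise operations on functions modulo a.e. equality).
   Context: $\mathfrak{c}$ is the cardinality of the continuum. A subset $S$ of a commutative algebra is strongly $\kappa$-algebrable if there is a set $Z=\{z_\alpha:\alpha<\kappa\}$ such that for every nonzero polynomial $P$ without constant term and distinct $z_{\alpha_1},\dots,z_{\alpha_n}\in Z$, $P(z_{\alpha_1},\dots,z_{\alpha_n})\neq0$, and the algebra generated by $Z$ is contained in $S\cup\{0\}$. *)

theory Defs
  imports "HOL-Analysis.Analysis"
begin

definition riemann_integrable_on :: "(real \<Rightarrow> real) \<Rightarrow> real \<Rightarrow> real \<Rightarrow> bool" where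
  "riemann_integrable_on f a b \<longleftrightarrow>
     (\<exists>I::real. \<forall>\<epsilon>>0. \<exists>\<delta>>0. \<forall>D. D tagged_division_of {a..b} \<and> (\<forall>(x,K)\<in>D. Henstock_Kurzweil_Integration.content K < \<delta>) \<longrightarrow>
        \<bar>(\<Sum>(x,K)\<in>D. Henstock_Kurzweil_Integration.content K * f x) - I\<bar> < \<epsilon>)"

definition nowhere_riemann_L1 :: "(real \<Rightarrow> real) set" where
  "nowhere_riemann_L1 = {f. integrable (lebesgue_on {0..1}) f \<and>
     (\<forall>a b. 0 \<le> a \<and> a < b \<and> b \<le> 1 \<longrightarrow>
        \<not> (\<exists>g. riemann_integrable_on g a b \<and> (AE x in lebesgue_on {a..b}. f x = g x)))}"

text \<open>Multivariate polynomials without constant term in n variables: a finite set M of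
exponent vectors (functions nat => nat vanishing from n on), none of them the zero vector,
with coefficients c.\<close>
definition mpoly_eval :: "(nat \<Rightarrow> nat) set \<Rightarrow> ((nat \<Rightarrow> nat) \<Rightarrow> real) \<Rightarrow> real list \<Rightarrow> real" where
  "mpoly_eval M c xs = (\<Sum>e\<in>M. c e * (\<Prod>i<length xs. (xs ! i) ^ (e i)))"

definition nonconst_poly :: "nat \<Rightarrow> (nat \<Rightarrow> nat) set \<Rightarrow> ((nat \<Rightarrow> nat) \<Rightarrow> real) \<Rightarrow> bool" where
  "nonconst_poly n M c \<longleftrightarrow> finite M \<and> (\<forall>e\<in>M. e \<noteq> (\<lambda>_. 0) \<and> (\<forall>i\<ge>n. e i = 0))
      \<and> (\<exists>e\<in>M. c e \<noteq> 0)"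

text \<open>The generators are indexed by the reals (a set of cardinality continuum). For every nonzero
polynomial P without constant term and distinct indices, P(z) is nonzero (not a.e. zero),
and every element of the generated algebra lies in S or is zero; since the generated algebra
consists exactly of such P(z) (and 0), this is expressed as P(z) being in S.\<close>
definition strongly_c_algebrable_ae :: "(real \<Rightarrow> real) set \<Rightarrow> bool" where
  "strongly_c_algebrable_ae S \<longleftrightarrow>
     (\<exists>z :: real \<Rightarrow> real \<Rightarrow> real.
        \<forall>n (\<alpha>s :: real list) M c.
          length \<alpha>s = n \<and> distinct \<alpha>s \<and> nonconst_poly n M c \<longrightarrow>
            \<not> (AE t in lebesgue_on {0..1}. mpoly_eval M c (map (\<lambda>\<alpha>. z \<alpha> t) \<alpha>s) = 0)
            \<and> (\<lambda>t. mpoly_eval M c (map (\<lambda>\<alpha>. z \<alpha> t) \<alpha>s)) \<in> S)"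

end

theory Submission
  imports Defs
begin


lemma exp_at_top_lin:
  fixes b :: real assumes "b > 0"
  shows "filterlim (\<lambda>x. exp (b * x)) at_top at_top"
  by (rule filterlim_compose[OF exp_at_top])
     (rule filterlim_tendsto_pos_mult_at_top[OF tendsto_const assms filterlim_ident])

lemma exp_neg_lin:
  fixes b :: real assumes "b < 0"
  shows "((\<lambda>x. exp (b * x)) \<longlongrightarrow> 0) at_top"
proof -
  have "filterlim (\<lambda>x. (-b) * x) at_top at_top"
    using assms by (intro filterlim_tendsto_pos_mult_at_top[OF tendsto_const] filterlim_ident) auto
  hence "filterlim (\<lambda>x. b * x) at_bot at_top"
    by (simp add: filterlim_uminus_at_top)
  thus ?thesis by (rule filterlim_compose[OF exp_at_bot])
qed

lemma exp_sum_dominant: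
  fixes b d :: "nat \<Rightarrow> real"
  assumes Z: "finite Z" "j \<in> Z" and bj: "b j > 0" and lt: "\<forall>i\<in>Z-{j}. b i < b j" and dj: "d j > 0"
  shows "filterlim (\<lambda>x. \<Sum>i\<in>Z. d i * exp (b i * x)) at_top at_top"
proof -
  have eq: "(\<Sum>i\<in>Z. d i * exp (b i * x)) =
      (d j + (\<Sum>i\<in>Z-{j}. d i * exp ((b i - b j) * x))) * exp (b j * x)" for x
  proof -
    have "(\<Sum>i\<in>Z. d i * exp (b i * x)) = d j * exp (b j * x) + (\<Sum>i\<in>Z-{j}. d i * exp (b i * x))"
      using Z by (simp add: sum.remove)
    also have "(\<Sum>i\<in>Z-{j}. d i * exp (b i * x)) = (\<Sum>i\<in>Z-{j}. d i * exp ((b i - b j) * x)) * exp (b j * x)"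
      by (simp add: sum_distrib_right mult.assoc flip: exp_add) (simp add: algebra_simps)
    finally show ?thesis by (simp add: algebra_simps)
  qed
  have "((\<lambda>x. d j + (\<Sum>i\<in>Z-{j}. d i * exp ((b i - b j) * x))) \<longlongrightarrow> d j + 0) at_top"
    apply (intro tendsto_add tendsto_const tendsto_null_sum)
    subgoal for i using lt exp_neg_lin[of "b i - b j"] tendsto_mult[OF tendsto_const, of _ 0 _ "d i"]
      by auto
    done
  hence "filterlim (\<lambda>x. (d j + (\<Sum>i\<in>Z-{j}. d i * exp ((b i - b j) * x))) * exp (b j * x)) at_top at_top"
    using dj bj by (intro filterlim_tendsto_pos_mult_at_top exp_at_top_lin) auto
  thus ?thesis by (simp add: eq)
qed

definition Tsum :: "real list \<Rightarrow> (nat \<Rightarrow> nat) \<Rightarrow> real \<Rightarrow> real" where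
  "Tsum bs e x = (\<Sum>i<length bs. real (e i) * exp (bs!i * x))"

lemma Tsum_total:
  assumes dist: "distinct bs" and pos: "\<forall>b\<in>set bs. b > 0" and ne: "\<exists>i<length bs. e i \<noteq> e' i"
  shows "filterlim (\<lambda>x. Tsum bs e x - Tsum bs e' x) at_top at_top \<or>
         filterlim (\<lambda>x. Tsum bs e' x - Tsum bs e x) at_top at_top"
proof -
  define n where "n = length bs"
  define d where "d i = real (e i) - real (e' i)" for i
  define b where "b i = bs ! i" for i
  define Z where "Z = {i. i < n \<and> d i \<noteq> 0}"
  have finZ: "finite Z" unfolding Z_def by auto
  have Zne: "Z \<noteq> {}" using ne unfolding Z_def d_def n_def by auto
  obtain j where jZ: "j \<in> Z" and jmax: "b j = Max (b ` Z)"
  proof -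
    have "Max (b ` Z) \<in> b ` Z" using finZ Zne by simp
    then show ?thesis using that by (metis imageE)
  qed
  have lt: "\<forall>i\<in>Z-{j}. b i < b j"
  proof
    fix i assume i: "i \<in> Z - {j}"
    have "b i \<le> b j" using i jmax finZ by auto
    moreover have "b i \<noteq> b j" using i jZ dist unfolding b_def Z_def n_def
      by (auto simp: nth_eq_iff_index_eq)
    ultimately show "b i < b j" by auto
  qed
  have bj: "b j > 0" using jZ pos unfolding Z_def b_def n_def by auto
  have diff: "Tsum bs e x - Tsum bs e' x = (\<Sum>i\<in>Z. d i * exp (b i * x))" for x
  proof -
    have "Tsum bs e x - Tsum bs e' x = (\<Sum>i<n. d i * exp (b i * x))"
      unfolding Tsum_def n_def d_def b_def by (simp add: sum_subtractf algebra_simps)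
    also have "\<dots> = (\<Sum>i\<in>Z. d i * exp (b i * x))"
      by (rule sum.mono_neutral_right) (auto simp: Z_def)
    finally show ?thesis .
  qed
  have diff': "Tsum bs e' x - Tsum bs e x = (\<Sum>i\<in>Z. (- d i) * exp (b i * x))" for x
    using diff[of x] by (simp add: sum_negf)
  have "d j \<noteq> 0" using jZ unfolding Z_def by auto
  then consider "d j > 0" | "d j < 0" by linarith
  thus ?thesis
  proof cases
    case 1
    show ?thesis unfolding diff using exp_sum_dominant[where b=b and d=d, OF finZ jZ bj lt 1] by simp
  next
    case 2
    show ?thesis unfolding diff' using exp_sum_dominant[where b=b and d="\<lambda>i. - d i", OF finZ jZ bj lt] 2 by simp
  qed
qed

lemma total_min_exists:
  assumes "finite X" "X \<noteq> {}"
    and tot: "\<And>x y. x \<in> X \<Longrightarrow> y \<in> X \<Longrightarrow> x \<noteq> y \<Longrightarrow> R x y \<or> R y x"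
    and tr: "\<And>x y z. x \<in> X \<Longrightarrow> y \<in> X \<Longrightarrow> z \<in> X \<Longrightarrow> R x y \<Longrightarrow> R y z \<Longrightarrow> R x z"
  shows "\<exists>m\<in>X. \<forall>y\<in>X. y \<noteq> m \<longrightarrow> R m y"
  using assms
proof (induction X rule: finite_ne_induct)
  case (singleton x) show ?case by simp
next
  case (insert x F)
  have "\<exists>m\<in>F. \<forall>y\<in>F. y \<noteq> m \<longrightarrow> R m y"
    apply (rule insert.IH)
    subgoal for a c by (rule insert.prems(1)) auto
    subgoal for a c d by (rule insert.prems(2)) auto
    done
  then obtain m where m: "m \<in> F" "\<forall>y\<in>F. y \<noteq> m \<longrightarrow> R m y" by blast
  have "x \<noteq> m" using insert.hyps m by auto
  then have "R x m \<or> R m x" using insert.prems(1)[of x m] m by simp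
  thus ?case
  proof
    assume "R x m"
    have "\<forall>y\<in>insert x F. y \<noteq> x \<longrightarrow> R x y"
    proof (intro ballI impI)
      fix y assume y: "y \<in> insert x F" "y \<noteq> x"
      then have yF: "y \<in> F" by simp
      show "R x y"
      proof (cases "y = m")
        case True then show ?thesis using \<open>R x m\<close> by simp
      next
        case False
        then have "R m y" using m yF by simp
        then show ?thesis using insert.prems(2)[of x m y] \<open>R x m\<close> m(1) yF by simp
      qed
    qed
    then show ?thesis by blast
  next
    assume "R m x"
    then have "\<forall>y\<in>insert x F. y \<noteq> m \<longrightarrow> R m y" using m by simp
    then show ?thesis using m(1) by blast
  qed
qed

lemma G_eventually_nonzero:
  assumes dist: "distinct bs" and pos: "\<forall>b\<in>set bs. b > 0"
    and finM: "finite M" and van: "\<forall>e\<in>M. \<forall>i\<ge>length bs. e i = 0"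
    and nz: "\<exists>e\<in>M. c e \<noteq> 0"
  shows "eventually (\<lambda>x. (\<Sum>e\<in>M. c e * exp (- Tsum bs e x)) \<noteq> 0) at_top"
proof -
  define M' where "M' = {e\<in>M. c e \<noteq> 0}"
  define R where "R e e' \<longleftrightarrow> filterlim (\<lambda>x. Tsum bs e' x - Tsum bs e x) at_top at_top" for e e'
  have finM': "finite M'" using finM unfolding M'_def by auto
  have M'ne: "M' \<noteq> {}" using nz unfolding M'_def by auto
  have "\<exists>m\<in>M'. \<forall>y\<in>M'. y \<noteq> m \<longrightarrow> R m y"
  proof (rule total_min_exists[OF finM' M'ne])
    fix x y assume xy: "x \<in> M'" "y \<in> M'" "x \<noteq> y"
    have "\<exists>i<length bs. y i \<noteq> x i"
    proof (rule ccontr)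
      assume "\<not> ?thesis"
      then have "\<forall>i. y i = x i" using xy van unfolding M'_def by (metis (mono_tags, lifting) mem_Collect_eq not_le)
      then show False using xy by auto
    qed
    then show "R x y \<or> R y x" using Tsum_total[OF dist pos, of y x] unfolding R_def by auto
  next
    fix x y z assume "R x y" "R y z"
    then have "filterlim (\<lambda>t. (Tsum bs z t - Tsum bs y t) + (Tsum bs y t - Tsum bs x t)) at_top at_top"
      unfolding R_def by (rule filterlim_at_top_add_at_top[rotated])
    then show "R x z" unfolding R_def by simp
  qed
  then obtain m where m: "m \<in> M'" "\<forall>y\<in>M'. y \<noteq> m \<longrightarrow> R m y" by blast
  have cm: "c m \<noteq> 0" using m unfolding M'_def by auto
  have lim: "((\<lambda>x. c m + (\<Sum>e\<in>M'-{m}. c e * exp (- (Tsum bs e x - Tsum bs m x)))) \<longlongrightarrow> c m + 0) at_top"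
  proof (intro tendsto_add tendsto_const tendsto_null_sum)
    fix e assume e: "e \<in> M' - {m}"
    then have "R m e" using m by auto
    then have "filterlim (\<lambda>x. - (Tsum bs e x - Tsum bs m x)) at_bot at_top"
      unfolding R_def by (simp add: filterlim_uminus_at_top)
    then have "((\<lambda>x. exp (- (Tsum bs e x - Tsum bs m x))) \<longlongrightarrow> 0) at_top"
      by (rule filterlim_compose[OF exp_at_bot])
    then show "((\<lambda>x. c e * exp (- (Tsum bs e x - Tsum bs m x))) \<longlongrightarrow> 0) at_top"
      using tendsto_mult[OF tendsto_const, of _ 0 _ "c e"] by auto
  qed
  have ev: "eventually (\<lambda>x. c m + (\<Sum>e\<in>M'-{m}. c e * exp (- (Tsum bs e x - Tsum bs m x))) \<noteq> 0) at_top"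
    using tendsto_imp_eventually_ne[OF lim] cm by simp
  have eq: "(\<Sum>e\<in>M. c e * exp (- Tsum bs e x)) =
     exp (- Tsum bs m x) * (c m + (\<Sum>e\<in>M'-{m}. c e * exp (- (Tsum bs e x - Tsum bs m x))))" for x
  proof -
    have "(\<Sum>e\<in>M. c e * exp (- Tsum bs e x)) = (\<Sum>e\<in>M'. c e * exp (- Tsum bs e x))"
      by (rule sum.mono_neutral_right) (use finM in \<open>auto simp: M'_def\<close>)
    also have "\<dots> = c m * exp (- Tsum bs m x) + (\<Sum>e\<in>M'-{m}. c e * exp (- Tsum bs e x))"
      using finM' m(1) by (simp add: sum.remove)
    also have "(\<Sum>e\<in>M'-{m}. c e * exp (- Tsum bs e x)) =
        exp (- Tsum bs m x) * (\<Sum>e\<in>M'-{m}. c e * exp (- (Tsum bs e x - Tsum bs m x)))"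
      by (simp add: sum_distrib_left mult.left_commute flip: exp_add)
    finally show ?thesis by (simp add: algebra_simps)
  qed
  show ?thesis using ev by eventually_elim (simp add: eq)
qed

definition H :: "real \<Rightarrow> real \<Rightarrow> real" where
  "H \<beta> r = (if 0 < r then exp (- exp (\<beta> / r)) else 0)"

definition Qf :: "real list \<Rightarrow> (nat \<Rightarrow> nat) set \<Rightarrow> ((nat \<Rightarrow> nat) \<Rightarrow> real) \<Rightarrow> real \<Rightarrow> real" where
  "Qf bs M c r = mpoly_eval M c (map (\<lambda>\<beta>. H \<beta> r) bs)"

lemma H_nonneg: "0 \<le> H \<beta> r" by (simp add: H_def)
lemma H_le1: "H \<beta> r \<le> 1" by (simp add: H_def)

lemma H_le_lin: assumes "\<beta> > 0" "r \<ge> 0" shows "H \<beta> r \<le> r / \<beta>"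
proof (cases "r > 0")
  case True
  have y: "\<beta> / r > 0" using True assms by simp
  have "exp (- exp (\<beta> / r)) \<le> exp (- (\<beta> / r))"
    using exp_ge_add_one_self[of "\<beta>/r"] by (subst exp_le_cancel_iff) linarith
  also have "\<dots> = 1 / exp (\<beta> / r)" by (simp add: exp_minus field_simps)
  also have "\<dots> \<le> 1 / (\<beta> / r)"
  proof -
    have a: "\<beta> / r \<le> exp (\<beta> / r)" using exp_ge_add_one_self[of "\<beta>/r"] by linarith
    have b: "0 < exp (\<beta> / r) * (\<beta> / r)" using y by (intro mult_pos_pos) auto
    show ?thesis by (rule divide_left_mono[OF a _ b]) simp
  qed
  also have "\<dots> = r / \<beta>" by simp
  finally show ?thesis using True by (simp add: H_def)
qed (use assms in \<open>simp add: H_def\<close>)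

lemma Qf_pos: assumes "0 < r"
  shows "Qf bs M c r = (\<Sum>e\<in>M. c e * exp (- Tsum bs e (1/r)))"
proof -
  have "(\<Prod>i<length bs. (map (\<lambda>\<beta>. H \<beta> r) bs ! i) ^ e i) = exp (- Tsum bs e (1/r))" for e
  proof -
    have "(\<Prod>i<length bs. (map (\<lambda>\<beta>. H \<beta> r) bs ! i) ^ e i) =
        (\<Prod>i<length bs. exp (real (e i) * - exp (bs ! i * (1/r))))"
      using assms by (intro prod.cong refl) (simp add: H_def flip: exp_of_nat_mult)
    also have "\<dots> = exp (\<Sum>i<length bs. real (e i) * - exp (bs ! i * (1/r)))"
      by (simp add: exp_sum)
    also have "\<dots> = exp (- Tsum bs e (1/r))"
      by (simp add: Tsum_def sum_negf)
    finally show ?thesis .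
  qed
  then show ?thesis unfolding Qf_def mpoly_eval_def by simp
qed

lemma Qf_nonvanish:
  assumes dist: "distinct bs" and pos: "\<forall>b\<in>set bs. b > 0"
    and finM: "finite M" and van: "\<forall>e\<in>M. \<forall>i\<ge>length bs. e i = 0"
    and nz: "\<exists>e\<in>M. c e \<noteq> 0"
  shows "\<exists>r0>0. \<forall>r. 0 < r \<and> r < r0 \<longrightarrow> Qf bs M c r \<noteq> 0"
proof -
  obtain X where X: "\<And>x. x \<ge> X \<Longrightarrow> (\<Sum>e\<in>M. c e * exp (- Tsum bs e x)) \<noteq> 0"
    using G_eventually_nonzero[OF assms] unfolding eventually_at_top_linorder by blast
  define r0 where "r0 = 1 / max X 1"
  have "r0 > 0" unfolding r0_def by simp
  moreover have "Qf bs M c r \<noteq> 0" if r: "0 < r" "r < r0" for r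
  proof -
    have mp: "max X 1 > 0" by simp
    have "r * max X 1 < 1" using r mp unfolding r0_def by (simp add: less_divide_eq)
    then have "1 / r > max X 1" using r by (simp add: less_divide_eq mult.commute)
    then have "1 / r \<ge> X" by simp
    then show ?thesis using X Qf_pos[OF r(1)] by simp
  qed
  ultimately show ?thesis by blast
qed

lemma Qf_cont: "continuous_on {0<..} (Qf bs M c)"
proof -
  have "continuous_on {0<..} (\<lambda>r. \<Sum>e\<in>M. c e * exp (- (\<Sum>i<length bs. real (e i) * exp (bs!i * (1/r)))))"
    by (intro continuous_intros) auto
  then show ?thesis
    by (rule continuous_on_cong[THEN iffD1, rotated 2]) (auto simp: Qf_pos Tsum_def)
qed

lemma prod_pow_le1:
  fixes x :: "nat \<Rightarrow> real"
  assumes "\<forall>i\<in>A. 0 \<le> x i \<and> x i \<le> 1"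
  shows "0 \<le> (\<Prod>i\<in>A. x i ^ e i) \<and> (\<Prod>i\<in>A. x i ^ e i) \<le> 1"
  using assms by (auto intro!: prod_nonneg prod_le_1 power_le_one)

lemma Qf_bound: "\<bar>Qf bs M c r\<bar> \<le> (\<Sum>e\<in>M. \<bar>c e\<bar>)"
proof -
  have "\<bar>Qf bs M c r\<bar> \<le> (\<Sum>e\<in>M. \<bar>c e * (\<Prod>i<length bs. (map (\<lambda>\<beta>. H \<beta> r) bs ! i) ^ e i)\<bar>)"
    unfolding Qf_def mpoly_eval_def by (simp add: sum_abs)
  also have "\<dots> \<le> (\<Sum>e\<in>M. \<bar>c e\<bar>)"
  proof (intro sum_mono)
    fix e
    have "\<forall>i\<in>{..<length bs}. 0 \<le> map (\<lambda>\<beta>. H \<beta> r) bs ! i \<and> map (\<lambda>\<beta>. H \<beta> r) bs ! i \<le> 1"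
      by (simp add: H_nonneg H_le1)
    from prod_pow_le1[OF this, of e]
    show "\<bar>c e * (\<Prod>i<length bs. (map (\<lambda>\<beta>. H \<beta> r) bs ! i) ^ e i)\<bar> \<le> \<bar>c e\<bar>"
      by (simp add: abs_mult mult_left_le)
  qed
  finally show ?thesis .
qed

lemma Qf_small:
  assumes pos: "\<forall>b\<in>set bs. b > 0" and np: "\<forall>e\<in>M. e \<noteq> (\<lambda>_. 0) \<and> (\<forall>i\<ge>length bs. e i = 0)"
    and r: "r \<ge> 0"
  shows "\<bar>Qf bs M c r\<bar> \<le> (\<Sum>e\<in>M. \<bar>c e\<bar>) * (r * (\<Sum>i<length bs. 1 / bs!i))"
proof -
  let ?x = "\<lambda>i. map (\<lambda>\<beta>. H \<beta> r) bs ! i"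
  let ?B = "r * (\<Sum>i<length bs. 1 / bs!i)"
  have "\<bar>Qf bs M c r\<bar> \<le> (\<Sum>e\<in>M. \<bar>c e * (\<Prod>i<length bs. ?x i ^ e i)\<bar>)"
    unfolding Qf_def mpoly_eval_def by (simp add: sum_abs)
  also have "\<dots> \<le> (\<Sum>e\<in>M. \<bar>c e\<bar> * ?B)"
  proof (intro sum_mono)
    fix e assume e: "e \<in> M"
    have bsnn: "\<forall>i<length bs. 0 < bs!i" using pos by auto
    obtain j where j: "e j \<noteq> 0" using np e by fastforce
    have jn: "j < length bs" using np e j by (meson not_le)
    have x01: "\<forall>i\<in>{..<length bs}. 0 \<le> ?x i \<and> ?x i \<le> 1" by (simp add: H_nonneg H_le1)
    have "(\<Prod>i<length bs. ?x i ^ e i) = ?x j ^ e j * (\<Prod>i\<in>{..<length bs}-{j}. ?x i ^ e i)"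
      using jn by (simp add: prod.remove)
    also have "\<dots> \<le> ?x j ^ e j * 1"
      using prod_pow_le1[of "{..<length bs}-{j}" ?x e] x01 jn
      by (intro mult_left_mono) auto
    also have "\<dots> \<le> ?x j" using x01 jn j by (simp add: power_le_one_iff power_decreasing[of 1 "e j", simplified])
    also have "\<dots> = H (bs!j) r" using jn by simp
    also have "\<dots> \<le> r / bs!j" using pos jn r by (intro H_le_lin) auto
    also have "\<dots> = r * (1 / bs!j)" by simp
    also have "\<dots> \<le> ?B"
      using bsnn jn r by (intro mult_left_mono member_le_sum) (auto simp: less_imp_le)
    finally have "(\<Prod>i<length bs. ?x i ^ e i) \<le> ?B" .
    moreover have "0 \<le> (\<Prod>i<length bs. ?x i ^ e i)" using prod_pow_le1[OF x01] by blast
    ultimately show "\<bar>c e * (\<Prod>i<length bs. ?x i ^ e i)\<bar> \<le> \<bar>c e\<bar> * ?B"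
      by (simp add: abs_mult mult_left_mono)
  qed
  finally show ?thesis by (simp add: sum_distrib_right)
qed


lemma H_measurable'[measurable]: "H \<beta> \<in> borel_measurable borel"
proof -
  have "(\<lambda>r. exp (- exp (\<beta> / r))) \<in> borel_measurable borel" by measurable
  then have "(\<lambda>r. if 0 < r then exp (- exp (\<beta> / r)) else 0) \<in> borel_measurable borel"
    by (intro measurable_If) auto
  then show ?thesis unfolding H_def[abs_def] .
qed
lemma Qf_alt: "Qf bs M c r = (\<Sum>e\<in>M. c e * (\<Prod>i<length bs. H (bs!i) r ^ e i))"
  unfolding Qf_def mpoly_eval_def by (intro sum.cong prod.cong refl) auto
lemma Qf_measurable'[measurable]: "Qf bs M c \<in> borel_measurable borel"
  unfolding Qf_alt[abs_def] by measurable


lemma AE_pos: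
  assumes ae: "AE x in lebesgue_on {a..b::real}. P x"
    and E: "E \<in> sets borel" "E \<subseteq> {a..b}" "measure lborel E > 0"
  shows "\<exists>x\<in>E. P x"
proof (rule ccontr)
  assume nH: "\<not> ?thesis"
  have "AE x in lebesgue. x \<in> {a..b} \<longrightarrow> P x"
    using ae by (subst (asm) AE_restrict_space_iff) auto
  then have "AE x in lborel. x \<in> {a..b} \<longrightarrow> P x"
    by (simp add: AE_completion_iff)
  then have "AE x in lborel. x \<notin> E"
    by eventually_elim (use nH E in auto)
  then have "E \<in> null_sets lborel" using E by (subst AE_iff_null_sets) auto
  then show False using E by (simp add: null_sets_def measure_def)
qed

lemma fine_div_exists:
  assumes "\<delta> > 0"
  shows "\<exists>D. D tagged_division_of {a..b::real} \<and> (\<forall>(x,K)\<in>D. Henstock_Kurzweil_Integration.content K < \<delta>)"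
proof -
  have "gauge (\<lambda>x. ball x (\<delta>/2))" using assms by (auto simp: gauge_def)
  from fine_division_exists[OF this, of a b]
  obtain D where D: "D tagged_division_of cbox a b" "(\<lambda>x. ball x (\<delta>/2)) fine D" by blast
  have "Henstock_Kurzweil_Integration.content K < \<delta>" if xK: "(x,K) \<in> D" for x K
  proof -
    obtain u v where K: "K = cbox u v" using D(1) xK by blast
    have sub: "K \<subseteq> ball x (\<delta>/2)" using D(2) xK by (auto simp: fine_def)
    show ?thesis
    proof (cases "u \<le> v")
      case True
      then have "u \<in> K" "v \<in> K" using K by auto
      then have "dist x u < \<delta>/2" "dist x v < \<delta>/2" using sub by auto
      then have "\<bar>x - u\<bar> < \<delta>/2" "\<bar>x - v\<bar> < \<delta>/2" by (auto simp: dist_real_def)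
      then have "v - u < \<delta>" by linarith
      then show ?thesis using True K by simp
    next
      case False then show ?thesis using K assms by simp
    qed
  qed
  then show ?thesis using D(1) by auto
qed

lemma retag:
  assumes D: "D tagged_division_of S" and tau: "\<forall>K\<in>snd ` D. \<tau> K \<in> K"
  shows "(\<lambda>K. (\<tau> K, K)) ` (snd ` D) tagged_division_of S"
proof -
  have d: "snd ` D division_of S" by (rule division_of_tagged_division[OF D])
  show ?thesis
  proof (rule tagged_division_ofI)
    show "finite ((\<lambda>K. (\<tau> K, K)) ` snd ` D)" using d by auto
  next
    fix x K assume "(x, K) \<in> (\<lambda>K. (\<tau> K, K)) ` snd ` D"
    then have xK: "K \<in> snd ` D" "x = \<tau> K" by auto
    show "x \<in> K" using xK tau by auto
    show "K \<subseteq> S" using xK d by auto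
    show "\<exists>a b. K = cbox a b" using xK d by auto
  next
    fix x1 K1 x2 K2 assume "(x1, K1) \<in> (\<lambda>K. (\<tau> K, K)) ` snd ` D" "(x2, K2) \<in> (\<lambda>K. (\<tau> K, K)) ` snd ` D"
      "(x1, K1) \<noteq> (x2, K2)"
    then have "K1 \<in> snd ` D" "K2 \<in> snd ` D" "K1 \<noteq> K2" by auto
    then show "interior K1 \<inter> interior K2 = {}" using d by (meson division_ofD(5))
  next
    show "\<Union> {K. \<exists>x. (x, K) \<in> (\<lambda>K. (\<tau> K, K)) ` snd ` D} = S"
      using d by (auto simp: division_of_def) 
  qed
qed

lemma retag_sum:
  "(\<Sum>(x,K)\<in>(\<lambda>K. (\<tau> K, K)) ` d. Henstock_Kurzweil_Integration.content K * g x) = (\<Sum>K\<in>d. Henstock_Kurzweil_Integration.content K * g (\<tau> K))"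
  by (subst sum.reindex) (auto simp: inj_on_def)

lemma retag_fine:
  assumes "\<forall>(x,K)\<in>D. Henstock_Kurzweil_Integration.content K < \<delta>"
  shows "\<forall>(x,K)\<in>(\<lambda>K. (\<tau> K, K)) ` (snd ` D). Henstock_Kurzweil_Integration.content K < \<delta>"
  using assms by auto



lemma not_riemann:
  fixes F g :: "real \<Rightarrow> real"
  assumes ab: "a < b"
    and A: "A \<in> sets borel" "A \<subseteq> {a..b}" "measure lborel A > 0"
    and m: "m > 0" and sig: "\<bar>\<sigma>\<bar> = 1"
    and up: "\<forall>t\<in>A. \<sigma> * F t \<ge> m"
    and lo: "\<forall>u v. a \<le> u \<and> u < v \<and> v \<le> b \<longrightarrow>
              (\<exists>E\<in>sets borel. E \<subseteq> {u..v} \<and> measure lborel E > 0 \<and> (\<forall>t\<in>E. \<sigma> * F t \<le> m/2))"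
    and ae: "AE x in lebesgue_on {a..b}. F x = g x"
  shows "\<not> riemann_integrable_on g a b"
proof
  assume "riemann_integrable_on g a b"
  then obtain I where I: "\<forall>\<epsilon>>0. \<exists>\<delta>>0. \<forall>D. D tagged_division_of {a..b} \<and>
      (\<forall>(x,K)\<in>D. Henstock_Kurzweil_Integration.content K < \<delta>) \<longrightarrow>
      \<bar>(\<Sum>(x,K)\<in>D. Henstock_Kurzweil_Integration.content K * g x) - I\<bar> < \<epsilon>"
    unfolding riemann_integrable_on_def by blast
  define \<epsilon> where "\<epsilon> = m * measure lborel A / 4"
  have \<epsilon>: "\<epsilon> > 0" using m A unfolding \<epsilon>_def by simp
  from I \<epsilon> have "\<exists>\<delta>>0. \<forall>D. D tagged_division_of {a..b} \<and>
      (\<forall>(x,K)\<in>D. Henstock_Kurzweil_Integration.content K < \<delta>) \<longrightarrow>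
      \<bar>(\<Sum>(x,K)\<in>D. Henstock_Kurzweil_Integration.content K * g x) - I\<bar> < \<epsilon>" by simp
  then obtain \<delta> where \<delta>: "\<delta> > 0" and Hd0: "\<forall>D. D tagged_division_of {a..b} \<and>
      (\<forall>(x,K)\<in>D. Henstock_Kurzweil_Integration.content K < \<delta>) \<longrightarrow>
      \<bar>(\<Sum>(x,K)\<in>D. Henstock_Kurzweil_Integration.content K * g x) - I\<bar> < \<epsilon>" by auto
  have Hd: "\<bar>(\<Sum>(x,K)\<in>D. Henstock_Kurzweil_Integration.content K * g x) - I\<bar> < \<epsilon>"
    if "D tagged_division_of {a..b}" "\<forall>(x,K)\<in>D. Henstock_Kurzweil_Integration.content K < \<delta>" for D
    using Hd0 that by blast
  obtain D where D: "D tagged_division_of {a..b}" "\<forall>(x,K)\<in>D. Henstock_Kurzweil_Integration.content K < \<delta>"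
    using fine_div_exists[OF \<delta>] by blast
  define d where "d = snd ` D"
  have d: "d division_of {a..b}" unfolding d_def by (rule division_of_tagged_division[OF D(1)])
  have findd: "finite d" using d by auto
  define P where "P K \<longleftrightarrow> measure lborel (K \<inter> A) > 0" for K
  have Kiv: "\<exists>u v. K = {u..v} \<and> a \<le> u \<and> u < v \<and> v \<le> b" if K: "K \<in> d" "P K" for K
  proof -
    obtain u v where uv: "K = cbox u v" using division_ofD(4)[OF d K(1)] by blast
    have Ksub: "K \<subseteq> {a..b}" "K \<noteq> {}" using division_ofD(2,3)[OF d K(1)] by auto
    have uv': "K = {u..v}" using uv by simp
    then have "u \<le> v" using Ksub by auto
    moreover have "u \<noteq> v"
    proof
      assume "u = v"
      have Kf: "K \<in> fmeasurable lborel" unfolding uv by (rule fmeasurable_cbox)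
      have "measure lborel (K \<inter> A) \<le> measure lborel K"
        by (rule measure_mono_fmeasurable[OF _ _ Kf]) (use uv A in auto)
      also have "measure lborel K = 0" using \<open>u = v\<close> uv' by simp
      finally show False using K unfolding P_def by simp
    qed
    ultimately have "u < v" by simp
    have "u \<in> K" "v \<in> K" using uv' \<open>u < v\<close> by auto
    then have "a \<le> u" "v \<le> b" using Ksub(1) by auto
    then show ?thesis using uv' \<open>u < v\<close> by blast
  qed
  have Kborel: "K \<in> sets borel" if K: "K \<in> d" for K
  proof -
    obtain u v where "K = cbox u v" using division_ofD(4)[OF d K] by blast
    then show ?thesis by (simp only: borel_closed closed_cbox)
  qed
  have exup: "\<exists>t. t \<in> K \<and> t \<in> A \<and> F t = g t" if K: "K \<in> d" "P K" for K
  proof -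
    have KA: "K \<inter> A \<in> sets borel" using Kborel[OF K(1)] A(1) by auto
    have KA2: "K \<inter> A \<subseteq> {a..b}" using A(2) by auto
    have KA3: "measure lborel (K \<inter> A) > 0" using K(2) unfolding P_def .
    have "\<exists>x\<in>K \<inter> A. F x = g x" by (rule AE_pos[OF ae KA KA2 KA3])
    then show ?thesis by auto
  qed
  have exlo: "\<exists>t. t \<in> K \<and> \<sigma> * F t \<le> m/2 \<and> F t = g t" if K: "K \<in> d" "P K" for K
  proof -
    obtain u v where uv: "K = {u..v}" "a \<le> u" "u < v" "v \<le> b" using Kiv[OF K] by blast
    then obtain E where E: "E \<in> sets borel" "E \<subseteq> {u..v}" "measure lborel E > 0" "\<forall>t\<in>E. \<sigma> * F t \<le> m/2"
      using lo[rule_format, of u v] uv by blast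
    have E2: "E \<subseteq> {a..b}" using E(2) uv by auto
    have "\<exists>x\<in>E. F x = g x" by (rule AE_pos[OF ae E(1) E2 E(3)])
    then obtain x where x: "x \<in> E" "F x = g x" by blast
    have "x \<in> K" using x(1) E(2) uv(1) by auto
    moreover have "\<sigma> * F x \<le> m/2" using E(4) x(1) by blast
    ultimately show ?thesis using x(2) by blast
  qed
  have exK: "\<exists>t. t \<in> K" if "K \<in> d" for K
  proof -
    have "K \<noteq> {}" using division_ofD(3)[OF d that] .
    then show ?thesis by blast
  qed
  define tu where "tu K = (if P K then SOME t. t \<in> K \<and> t \<in> A \<and> F t = g t else SOME t. t \<in> K)" for K
  define tl where "tl K = (if P K then SOME t. t \<in> K \<and> \<sigma> * F t \<le> m/2 \<and> F t = g t else SOME t. t \<in> K)" for K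
  have tu0: "tu K \<in> K \<and> (P K \<longrightarrow> tu K \<in> A \<and> F (tu K) = g (tu K))" if K: "K \<in> d" for K
  proof (cases "P K")
    case True
    show ?thesis unfolding tu_def if_P[OF True] using someI_ex[OF exup[OF K True]] by blast
  next
    case False
    from someI_ex[OF exK[OF K]] show ?thesis using False unfolding tu_def by simp
  qed
  have tl0: "tl K \<in> K \<and> (P K \<longrightarrow> \<sigma> * F (tl K) \<le> m/2 \<and> F (tl K) = g (tl K))" if K: "K \<in> d" for K
  proof (cases "P K")
    case True
    show ?thesis unfolding tl_def if_P[OF True] using someI_ex[OF exlo[OF K True]] by blast
  next
    case False
    from someI_ex[OF exK[OF K]] show ?thesis using False unfolding tl_def by simp
  qed
  have tu: "tu K \<in> K" "P K \<Longrightarrow> tu K \<in> A \<and> F (tu K) = g (tu K)" if "K \<in> d" for K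
    using tu0[OF that] by auto
  have tl: "tl K \<in> K" "P K \<Longrightarrow> \<sigma> * F (tl K) \<le> m/2 \<and> F (tl K) = g (tl K)" if "K \<in> d" for K
    using tl0[OF that] by auto
  have npeq: "\<not> P K \<Longrightarrow> tu K = tl K" for K unfolding tu_def tl_def by simp
  define Su where "Su = (\<Sum>K\<in>d. Henstock_Kurzweil_Integration.content K * g (tu K))"
  define Sl where "Sl = (\<Sum>K\<in>d. Henstock_Kurzweil_Integration.content K * g (tl K))"
  have "\<bar>Su - I\<bar> < \<epsilon>"
  proof -
    have "(\<lambda>K. (tu K, K)) ` d tagged_division_of {a..b}"
      unfolding d_def by (rule retag[OF D(1)]) (use tu in \<open>auto simp: d_def\<close>)
    moreover have "\<forall>(x,K)\<in>(\<lambda>K. (tu K, K)) ` d. Henstock_Kurzweil_Integration.content K < \<delta>"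
      unfolding d_def by (rule retag_fine[OF D(2)])
    ultimately have "\<bar>(\<Sum>(x,K)\<in>(\<lambda>K. (tu K, K)) ` d. Henstock_Kurzweil_Integration.content K * g x) - I\<bar> < \<epsilon>"
      by (rule Hd)
    then show ?thesis unfolding Su_def retag_sum .
  qed
  moreover have "\<bar>Sl - I\<bar> < \<epsilon>"
  proof -
    have "(\<lambda>K. (tl K, K)) ` d tagged_division_of {a..b}"
      unfolding d_def by (rule retag[OF D(1)]) (use tl in \<open>auto simp: d_def\<close>)
    moreover have "\<forall>(x,K)\<in>(\<lambda>K. (tl K, K)) ` d. Henstock_Kurzweil_Integration.content K < \<delta>"
      unfolding d_def by (rule retag_fine[OF D(2)])
    ultimately have "\<bar>(\<Sum>(x,K)\<in>(\<lambda>K. (tl K, K)) ` d. Henstock_Kurzweil_Integration.content K * g x) - I\<bar> < \<epsilon>"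
      by (rule Hd)
    then show ?thesis unfolding Sl_def retag_sum .
  qed
  ultimately have lt: "\<bar>Su - Sl\<bar> < 2 * \<epsilon>" by linarith
  have "\<sigma> * (Su - Sl) = (\<Sum>K\<in>d. Henstock_Kurzweil_Integration.content K * (\<sigma> * (g (tu K) - g (tl K))))"
    unfolding Su_def Sl_def by (simp add: sum_subtractf sum_distrib_left algebra_simps)
  also have "\<dots> \<ge> (\<Sum>K\<in>d. (if P K then Henstock_Kurzweil_Integration.content K else 0) * (m/2))"
  proof (intro sum_mono)
    fix K assume K: "K \<in> d"
    show "(if P K then Henstock_Kurzweil_Integration.content K else 0) * (m/2)
      \<le> Henstock_Kurzweil_Integration.content K * (\<sigma> * (g (tu K) - g (tl K)))"
    proof (cases "P K")
      case True
      have "\<sigma> * F (tu K) \<ge> m" using up tu[OF K] True by auto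
      moreover have "\<sigma> * F (tl K) \<le> m/2" using tl[OF K] True by auto
      ultimately have "m/2 \<le> \<sigma> * (g (tu K) - g (tl K))"
        using tu[OF K] tl[OF K] True by (simp add: algebra_simps)
      then have "Henstock_Kurzweil_Integration.content K * (m/2) \<le>
          Henstock_Kurzweil_Integration.content K * (\<sigma> * (g (tu K) - g (tl K)))"
        by (intro mult_left_mono) auto
      then show ?thesis using True by simp
    next
      case False then show ?thesis by (simp add: npeq)
    qed
  qed
  finally have ge0: "\<sigma> * (Su - Sl) \<ge> (\<Sum>K\<in>d. (if P K then Henstock_Kurzweil_Integration.content K else 0) * (m/2))" .
  have ge: "\<sigma> * (Su - Sl) \<ge> (\<Sum>K\<in>d. (if P K then Henstock_Kurzweil_Integration.content K else 0)) * (m/2)"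
    unfolding sum_distrib_right using ge0 .
  have "measure lborel A \<le> measure lborel (\<Union>K\<in>d. K \<inter> A)"
  proof -
    have "A = (\<Union>K\<in>d. K \<inter> A)" using A(2) d by auto
    then show ?thesis by simp
  qed
  also have "\<dots> \<le> (\<Sum>K\<in>d. measure lborel (K \<inter> A))"
    by (rule measure_UNION_le[OF findd]) (use Kborel A in auto)
  also have "\<dots> \<le> (\<Sum>K\<in>d. (if P K then Henstock_Kurzweil_Integration.content K else 0))"
  proof (intro sum_mono)
    fix K assume K: "K \<in> d"
    show "measure lborel (K \<inter> A) \<le> (if P K then Henstock_Kurzweil_Integration.content K else 0)"
    proof (cases "P K")
      case True
      obtain u v where uv: "K = cbox u v" using division_ofD(4)[OF d K] by blast
      have Kf: "K \<in> fmeasurable lborel" unfolding uv by (rule fmeasurable_cbox)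
      have "measure lborel (K \<inter> A) \<le> measure lborel K"
        by (rule measure_mono_fmeasurable[OF _ _ Kf]) (use uv A in auto)
      then show ?thesis using True by simp
    next
      case False then show ?thesis unfolding P_def by simp
    qed
  qed
  finally have "measure lborel A * (m/2) \<le> (\<Sum>K\<in>d. (if P K then Henstock_Kurzweil_Integration.content K else 0)) * (m/2)"
    using m by (intro mult_right_mono) auto
  also have "\<dots> \<le> \<sigma> * (Su - Sl)" by (rule ge)
  also have "\<dots> \<le> \<bar>\<sigma> * (Su - Sl)\<bar>" by (rule abs_ge_self)
  also have "\<dots> = \<bar>Su - Sl\<bar>" using sig by (simp add: abs_mult)
  finally show False using lt unfolding \<epsilon>_def by (simp add: mult.commute)
qed



definition qn :: "nat \<Rightarrow> real" where "qn k = from_nat_into \<rat> k"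
definition rho :: "real \<Rightarrow> real" where "rho t = (INF k. 2^k * \<bar>t - qn k\<bar>)"

lemma rho_bdd: "bdd_below (range (\<lambda>k. (2::real)^k * \<bar>t - qn k\<bar>))"
  by (rule bdd_belowI[of _ 0]) auto

lemma rho_nonneg: "0 \<le> rho t"
  unfolding rho_def by (rule cINF_greatest) auto

lemma rho_le: "rho t \<le> 2^k * \<bar>t - qn k\<bar>"
  unfolding rho_def by (rule cINF_lower[OF rho_bdd]) simp

lemma rho_less: "rho t < s \<longleftrightarrow> (\<exists>k. 2^k * \<bar>t - qn k\<bar> < s)"
  unfolding rho_def by (subst cINF_less_iff[OF UNIV_not_empty rho_bdd]) simp

lemma rho_less_set: "{t. rho t < s} = (\<Union>k. {t. 2^k * \<bar>t - qn k\<bar> < s})"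
  using rho_less by auto

lemma rho_meas[measurable]: "rho \<in> borel_measurable borel"
proof -
  have "{w \<in> space borel. rho w < a} \<in> sets borel" for a
  proof -
    have "open {t. 2^k * \<bar>t - qn k\<bar> < a}" for k
      by (intro open_Collect_less continuous_intros)
    then have "open {t. rho t < a}" unfolding rho_less_set by auto
    then show ?thesis by simp
  qed
  then show ?thesis by (simp add: borel_measurable_iff_less)
qed

lemma qn_dense: assumes "a < b" shows "\<exists>k. a < qn k \<and> qn k < b"
proof -
  obtain r where r: "r \<in> \<rat>" "a < r" "r < b" using Rats_dense_in_real[OF assms] by blast
  obtain k where "from_nat_into \<rat> k = r" using from_nat_into_surj[OF countable_rat r(1)] by blast
  then show ?thesis using r unfolding qn_def by blast
qed

lemma rho_small_emeasure:
  assumes s: "s > 0"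
  shows "emeasure lborel {t. rho t < s} \<le> ennreal (4 * s)"
proof -
  define B where "B k = {qn k - s * (1/2)^k <..< qn k + s * (1/2)^k}" for k
  have eq: "{t. 2^k * \<bar>t - qn k\<bar> < s} = B k" for k
  proof -
    have "2^k * \<bar>t - qn k\<bar> < s \<longleftrightarrow> \<bar>t - qn k\<bar> < s * (1/2)^k" for t :: real
    proof -
      have "s * (1/2)^k = s / 2^k" by (simp add: power_one_over)
      moreover have "\<bar>t - qn k\<bar> < s / 2^k \<longleftrightarrow> \<bar>t - qn k\<bar> * 2^k < s"
        by (rule pos_less_divide_eq) simp
      ultimately show ?thesis by (simp add: mult.commute)
    qed
    note iff = this
    show ?thesis
    proof (rule set_eqI)
      fix t
      have "t \<in> {t. 2^k * \<bar>t - qn k\<bar> < s} \<longleftrightarrow> \<bar>t - qn k\<bar> < s * (1/2)^k"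
        unfolding mem_Collect_eq by (rule iff)
      also have "\<dots> \<longleftrightarrow> t \<in> B k"
        unfolding B_def greaterThanLessThan_iff abs_less_iff by auto
      finally show "t \<in> {t. 2^k * \<bar>t - qn k\<bar> < s} \<longleftrightarrow> t \<in> B k" .
    qed
  qed
  have "emeasure lborel {t. rho t < s} = emeasure lborel (\<Union>k. B k)"
    unfolding rho_less_set eq ..
  also have "\<dots> \<le> (\<Sum>k. emeasure lborel (B k))"
    by (rule emeasure_subadditive_countably) (auto simp: B_def)
  also have "\<dots> = (\<Sum>k. ennreal (2 * s * (1/2)^k))"
  proof (rule suminf_cong)
    fix k
    have r: "0 \<le> s * (1/2::real)^k" using s by simp
    have "emeasure lborel (B k) = ennreal ((qn k + s * (1/2)^k) - (qn k - s * (1/2)^k))"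
      unfolding B_def by (rule emeasure_lborel_Ioo) (use r in linarith)
    also have "(qn k + s * (1/2)^k) - (qn k - s * (1/2)^k) = 2 * s * (1/2)^k" by simp
    finally show "emeasure lborel (B k) = ennreal (2 * s * (1/2)^k)" .
  qed
  also have "\<dots> = ennreal (\<Sum>k. 2 * s * (1/2)^k)"
  proof (rule suminf_ennreal2)
    show "0 \<le> 2 * s * (1/2::real)^k" for k using s by simp
    show "summable (\<lambda>k. 2 * s * (1/2::real)^k)"
      by (rule summable_mult) (rule summable_geometric, simp)
  qed
  also have "(\<Sum>k. 2 * s * (1/2::real)^k) = 4 * s"
  proof -
    have g: "summable (\<lambda>k. (1/2::real)^k)" by (rule summable_geometric) simp
    have "(\<Sum>k. 2 * s * (1/2::real)^k) = 2 * s * (\<Sum>k. (1/2::real)^k)"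
      by (rule suminf_mult[OF g])
    also have "(\<Sum>k. (1/2::real)^k) = 2" using suminf_geometric[of "1/2::real"] by simp
    finally show ?thesis by simp
  qed
  finally show ?thesis .
qed

lemma rho_big_part:
  assumes cd: "c < d" and s: "s > 0"
  shows "measure lborel ({c<..<d} \<inter> {t. s \<le> rho t}) \<ge> (d - c) - 4 * s"
proof -
  let ?J = "{c<..<d}" and ?L = "{c<..<d} \<inter> {t. rho t < s}" and ?U = "{c<..<d} \<inter> {t. s \<le> rho t}"
  have Jf: "?J \<in> fmeasurable lborel" unfolding fmeasurable_def using cd by simp
  have Lf: "?L \<in> fmeasurable lborel"
    by (rule fmeasurableI2[OF Jf]) auto
  have "ennreal (measure lborel ?L) = emeasure lborel ?L" using emeasure_eq_measure2[OF Lf] by simp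
  also have "\<dots> \<le> emeasure lborel {t. rho t < s}" by (rule emeasure_mono) auto
  also have "\<dots> \<le> ennreal (4 * s)" by (rule rho_small_emeasure[OF s])
  finally have L: "measure lborel ?L \<le> 4 * s" using s by simp
  have "d - c = measure lborel ?J" using cd by simp
  also have "?J = ?U \<union> ?L" by auto
  also have "measure lborel (?U \<union> ?L) \<le> measure lborel ?U + measure lborel ?L"
    by (rule measure_Un_le) auto
  finally show ?thesis using L by linarith
qed



lemma const_sign:
  fixes \<Phi> :: "real \<Rightarrow> real"
  assumes cont: "continuous_on {s..r1} \<Phi>" and nz: "\<forall>r\<in>{s..r1}. \<Phi> r \<noteq> 0"
  shows "(\<forall>r\<in>{s..r1}. \<Phi> r > 0) \<or> (\<forall>r\<in>{s..r1}. \<Phi> r < 0)"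
proof (rule ccontr)
  assume "\<not> ?thesis"
  then obtain x y where xy: "x \<in> {s..r1}" "y \<in> {s..r1}" "\<Phi> x \<le> 0" "\<Phi> y \<ge> 0"
    by (meson not_le)
  have "\<exists>z\<in>{s..r1}. \<Phi> z = 0"
  proof (cases "x \<le> y")
    case True
    have c: "continuous_on {x..y} \<Phi>" using xy by (intro continuous_on_subset[OF cont]) auto
    obtain z where "x \<le> z" "z \<le> y" "\<Phi> z = 0" using IVT'[of \<Phi> x 0 y, OF xy(3) xy(4) True c] by blast
    then show ?thesis using xy by (intro bexI[of _ z]) auto
  next
    case False
    have c: "continuous_on {y..x} \<Phi>" using xy False by (intro continuous_on_subset[OF cont]) auto
    obtain z where "y \<le> z" "z \<le> x" "\<Phi> z = 0" using IVT2'[of \<Phi> x 0 y, OF xy(3) xy(4) _ c] False by auto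
    then show ?thesis using xy by (intro bexI[of _ z]) auto
  qed
  then show False using nz by blast
qed

lemma rho_near: assumes "2^k * \<bar>t - qn k\<bar> < r" shows "rho t < r"
  using rho_le[of t k] assms by linarith

lemma low_part:
  assumes d: "\<delta>' > 0" and uv: "u < v"
  shows "\<exists>E\<in>sets borel. E \<subseteq> {u..v} \<and> measure lborel E > 0 \<and> (\<forall>t\<in>E. rho t < \<delta>')"
proof -
  obtain k where k: "u < qn k" "qn k < v" using qn_dense[OF uv] by blast
  define p where "p = qn k"
  define w where "w = min (min (p - u) (v - p)) (\<delta>' / 2^k)"
  have w: "w > 0" using k d unfolding w_def p_def by simp
  have w2: "2^k * w \<le> \<delta>'"
  proof -
    have "w \<le> \<delta>' / 2^k" unfolding w_def by simp
    then show ?thesis by (simp add: field_simps)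
  qed
  define E where "E = {p - w <..< p + w}"
  have "E \<subseteq> {u..v}" unfolding E_def w_def by auto
  moreover have "measure lborel E > 0" unfolding E_def using w by simp
  moreover have "\<forall>t\<in>E. rho t < \<delta>'"
  proof
    fix t assume "t \<in> E"
    then have "\<bar>t - p\<bar> < w" unfolding E_def by (auto simp: abs_less_iff)
    then have "2^k * \<bar>t - qn k\<bar> < 2^k * w" unfolding p_def by simp
    then show "rho t < \<delta>'" using w2 rho_near by (meson less_le_trans)
  qed
  moreover have "E \<in> sets borel" unfolding E_def by simp
  ultimately show ?thesis by blast
qed

lemma core:
  fixes \<Phi> :: "real \<Rightarrow> real"
  assumes cont: "continuous_on {0<..} \<Phi>"
   and r0: "r0 > 0" and nz: "\<forall>r. 0 < r \<and> r < r0 \<longrightarrow> \<Phi> r \<noteq> 0"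
   and ab: "a < b"
  shows "\<exists>A m \<sigma>. A \<in> sets borel \<and> A \<subseteq> {a<..<b} \<and> measure lborel A > 0 \<and> m > 0 \<and> \<bar>\<sigma>\<bar> = 1
     \<and> (\<forall>t\<in>A. \<sigma> * \<Phi> (rho t) \<ge> m)"
proof -
  obtain k where k: "a < qn k" "qn k < b" using qn_dense[OF ab] by blast
  define p where "p = qn k"
  define r1 where "r1 = r0 / 2"
  have r1: "0 < r1" "r1 < r0" using r0 unfolding r1_def by auto
  define w where "w = min (min (p - a) (b - p)) (r1 / 2^k)"
  have w: "w > 0" using k r1 unfolding w_def p_def by simp
  have w2: "2^k * w \<le> r1"
  proof -
    have "w \<le> r1 / 2^k" unfolding w_def by simp
    then show ?thesis by (simp add: field_simps)
  qed
  have wr1: "w \<le> r1"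
  proof -
    have "(1::real) \<le> 2^k" by simp
    then have "w \<le> 2^k * w" using w by (simp add: mult_le_cancel_right1)
    then show ?thesis using w2 by linarith
  qed
  define s where "s = w / 4"
  have s: "0 < s" "s < r1" using w wr1 unfolding s_def by auto
  define A where "A = {p - w <..< p + w} \<inter> {t. s \<le> rho t}"
  have Ameas: "A \<in> sets borel" unfolding A_def by measurable
  have Asub: "A \<subseteq> {a<..<b}" unfolding A_def w_def by auto
  have "measure lborel A \<ge> ((p + w) - (p - w)) - 4 * s"
    unfolding A_def using rho_big_part[of "p - w" "p + w" s] w s by simp
  then have Apos: "measure lborel A > 0" unfolding s_def using w by simp
  have Arange: "rho t \<in> {s..r1}" if "t \<in> A" for t
  proof -
    have "\<bar>t - p\<bar> < w" "s \<le> rho t" using that unfolding A_def by (auto simp: abs_less_iff)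
    then have "2^k * \<bar>t - qn k\<bar> < 2^k * w" unfolding p_def by simp
    then have "rho t < r1" using w2 rho_near by (meson less_le_trans)
    then show ?thesis using \<open>s \<le> rho t\<close> by simp
  qed
  have contS: "continuous_on {s..r1} \<Phi>" using s by (intro continuous_on_subset[OF cont]) auto
  have nzS: "\<forall>r\<in>{s..r1}. \<Phi> r \<noteq> 0" using nz s r1 by auto
  obtain x0 where x0: "x0 \<in> {s..r1}" "\<forall>y\<in>{s..r1}. \<bar>\<Phi> x0\<bar> \<le> \<bar>\<Phi> y\<bar>"
  proof -
    have "continuous_on {s..r1} (\<lambda>r. \<bar>\<Phi> r\<bar>)" using contS by (intro continuous_intros)
    then have "\<exists>x\<in>{s..r1}. \<forall>y\<in>{s..r1}. \<bar>\<Phi> x\<bar> \<le> \<bar>\<Phi> y\<bar>"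
      using continuous_attains_inf[of "{s..r1}" "\<lambda>r. \<bar>\<Phi> r\<bar>"] s by auto
    then show ?thesis using that by blast
  qed
  define m where "m = \<bar>\<Phi> x0\<bar>"
  have m: "m > 0" using nzS x0 unfolding m_def by auto
  from const_sign[OF contS nzS]
  consider "\<forall>r\<in>{s..r1}. \<Phi> r > 0" | "\<forall>r\<in>{s..r1}. \<Phi> r < 0" by blast
  then show ?thesis
  proof cases
    case 1
    have "\<forall>t\<in>A. 1 * \<Phi> (rho t) \<ge> m"
    proof
      fix t assume t: "t \<in> A"
      have "m \<le> \<bar>\<Phi> (rho t)\<bar>" using x0 Arange[OF t] unfolding m_def by blast
      moreover have "\<Phi> (rho t) > 0" using 1 Arange[OF t] by blast
      ultimately show "1 * \<Phi> (rho t) \<ge> m" by simp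
    qed
    then show ?thesis using Ameas Asub Apos m by (intro exI[of _ A] exI[of _ m] exI[of _ 1]) auto
  next
    case 2
    have "\<forall>t\<in>A. -1 * \<Phi> (rho t) \<ge> m"
    proof
      fix t assume t: "t \<in> A"
      have "m \<le> \<bar>\<Phi> (rho t)\<bar>" using x0 Arange[OF t] unfolding m_def by blast
      moreover have "\<Phi> (rho t) < 0" using 2 Arange[OF t] by blast
      ultimately show "-1 * \<Phi> (rho t) \<ge> m" by simp
    qed
    then show ?thesis using Ameas Asub Apos m by (intro exI[of _ A] exI[of _ m] exI[of _ "-1"]) auto
  qed
qed



lemma nowhere_main:
  fixes \<Phi> :: "real \<Rightarrow> real"
  assumes meas: "\<Phi> \<in> borel_measurable borel"
   and cont: "continuous_on {0<..} \<Phi>"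
   and r0: "r0 > 0" and nz: "\<forall>r. 0 < r \<and> r < r0 \<longrightarrow> \<Phi> r \<noteq> 0"
   and small: "\<forall>\<eta>>0. \<exists>\<delta>>0. \<forall>r. 0 \<le> r \<and> r < \<delta> \<longrightarrow> \<bar>\<Phi> r\<bar> < \<eta>"
   and bnd: "\<forall>r. \<bar>\<Phi> r\<bar> \<le> B"
  shows "(\<lambda>t. \<Phi> (rho t)) \<in> nowhere_riemann_L1 \<and> \<not> (AE t in lebesgue_on {0..1}. \<Phi> (rho t) = 0)"
proof -
  define F where "F t = \<Phi> (rho t)" for t
  have Fb: "F \<in> borel_measurable borel"
    unfolding F_def[abs_def] by (rule measurable_compose[OF rho_meas meas])
  have Fl: "F \<in> borel_measurable (lebesgue_on {0..1})"
    by (rule measurable_restrict_space1, rule measurable_completion) (use Fb in simp)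
  have fm: "finite_measure (lebesgue_on {0..1::real})"
    by (rule finite_measure_lebesgue_on) (metis cbox_interval lmeasurable_cbox)
  have int: "integrable (lebesgue_on {0..1}) F"
    by (rule finite_measure.integrable_const_bound[OF fm, where B=B]) (use bnd Fl in \<open>auto simp: F_def intro!: AE_I2\<close>)
  have nr: "\<not> (\<exists>g. riemann_integrable_on g a b \<and> (AE x in lebesgue_on {a..b}. F x = g x))"
    if ab: "0 \<le> a" "a < b" "b \<le> 1" for a b
  proof
    assume "\<exists>g. riemann_integrable_on g a b \<and> (AE x in lebesgue_on {a..b}. F x = g x)"
    then obtain g where g: "riemann_integrable_on g a b" "AE x in lebesgue_on {a..b}. F x = g x" by blast
    obtain A m \<sigma> where A: "A \<in> sets borel" "A \<subseteq> {a<..<b}" "measure lborel A > 0" "m > 0" "\<bar>\<sigma>\<bar> = 1"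
      "\<forall>t\<in>A. \<sigma> * \<Phi> (rho t) \<ge> m"
      using core[OF cont r0 nz ab(2)] by blast
    obtain \<delta>' where d': "\<delta>' > 0" "\<forall>r. 0 \<le> r \<and> r < \<delta>' \<longrightarrow> \<bar>\<Phi> r\<bar> < m/2"
      using small A(4) by (meson half_gt_zero)
    have lo: "\<forall>u v. a \<le> u \<and> u < v \<and> v \<le> b \<longrightarrow>
              (\<exists>E\<in>sets borel. E \<subseteq> {u..v} \<and> measure lborel E > 0 \<and> (\<forall>t\<in>E. \<sigma> * F t \<le> m/2))"
    proof (intro allI impI)
      fix u v assume uv: "a \<le> u \<and> u < v \<and> v \<le> b"
      obtain E where E: "E \<in> sets borel" "E \<subseteq> {u..v}" "measure lborel E > 0" "\<forall>t\<in>E. rho t < \<delta>'"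
        using low_part[OF d'(1)] uv by blast
      have "\<forall>t\<in>E. \<sigma> * F t \<le> m/2"
      proof
        fix t assume t: "t \<in> E"
        have "\<bar>\<Phi> (rho t)\<bar> < m/2" using d'(2) E(4) t rho_nonneg by blast
        moreover have "\<sigma> * F t \<le> \<bar>\<sigma> * F t\<bar>" by simp
        moreover have "\<bar>\<sigma> * F t\<bar> = \<bar>F t\<bar>" using A(5) by (simp add: abs_mult)
        ultimately show "\<sigma> * F t \<le> m/2" unfolding F_def by linarith
      qed
      then show "\<exists>E\<in>sets borel. E \<subseteq> {u..v} \<and> measure lborel E > 0 \<and> (\<forall>t\<in>E. \<sigma> * F t \<le> m/2)"
        using E by blast
    qed
    have "\<not> riemann_integrable_on g a b"
      by (rule not_riemann[OF ab(2) A(1) _ A(3) A(4) A(5) _ lo g(2)])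
         (use A(2) A(6) in \<open>auto simp: F_def\<close>)
    then show False using g(1) by simp
  qed
  have nae: "\<not> (AE t in lebesgue_on {0..1}. F t = 0)"
  proof
    assume ae: "AE t in lebesgue_on {0..1}. F t = 0"
    obtain A m \<sigma> where A: "A \<in> sets borel" "A \<subseteq> {0<..<1}" "measure lborel A > 0" "m > 0" "\<bar>\<sigma>\<bar> = 1"
      "\<forall>t\<in>A. \<sigma> * \<Phi> (rho t) \<ge> m"
      using core[OF cont r0 nz, of 0 1] by auto
    have A2: "A \<subseteq> {0..1}" using A(2) by auto
    obtain t where "t \<in> A" "F t = 0" using AE_pos[OF ae A(1) A2 A(3)] by blast
    then show False using A(4) A(6) unfolding F_def by auto
  qed
  show ?thesis using int nr nae unfolding nowhere_riemann_L1_def F_def by auto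
qed



lemma small_from_lin:
  fixes \<Phi> :: "real \<Rightarrow> real"
  assumes L: "L \<ge> 0" and lin: "\<forall>r\<ge>0. \<bar>\<Phi> r\<bar> \<le> L * r"
  shows "\<forall>\<eta>>0. \<exists>\<delta>>0. \<forall>r. 0 \<le> r \<and> r < \<delta> \<longrightarrow> \<bar>\<Phi> r\<bar> < \<eta>"
proof (intro allI impI)
  fix \<eta> :: real assume e: "\<eta> > 0"
  define \<delta> where "\<delta> = \<eta> / (L + 1)"
  have d: "\<delta> > 0" using e L unfolding \<delta>_def by simp
  have "\<bar>\<Phi> r\<bar> < \<eta>" if r: "0 \<le> r" "r < \<delta>" for r
  proof -
    have "\<bar>\<Phi> r\<bar> \<le> L * r" using lin r by simp
    also have "\<dots> \<le> (L + 1) * r" using r by (simp add: distrib_right)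
    also have "\<dots> < (L + 1) * \<delta>" using r L by (intro mult_strict_left_mono) auto
    also have "\<dots> = \<eta>" unfolding \<delta>_def using L by simp
    finally show ?thesis .
  qed
  then show "\<exists>\<delta>>0. \<forall>r. 0 \<le> r \<and> r < \<delta> \<longrightarrow> \<bar>\<Phi> r\<bar> < \<eta>" using d by blast
qed

definition zgen :: "real \<Rightarrow> real \<Rightarrow> real" where
  "zgen \<alpha> t = H (exp \<alpha>) (rho t)"

theorem mainTheorem4:
  shows "strongly_c_algebrable_ae nowhere_riemann_L1"
  unfolding strongly_c_algebrable_ae_def
proof (intro exI[of _ zgen] allI impI)
  fix n and \<alpha>s :: "real list" and M c
  assume asm: "length \<alpha>s = n \<and> distinct \<alpha>s \<and> nonconst_poly n M c"
  define bs where "bs = map exp \<alpha>s"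
  have dist: "distinct bs" unfolding bs_def using asm by (simp add: distinct_map inj_on_def)
  have pos: "\<forall>b\<in>set bs. b > 0" unfolding bs_def by auto
  have len: "length bs = n" unfolding bs_def using asm by simp
  have np: "finite M" "\<forall>e\<in>M. e \<noteq> (\<lambda>_. 0) \<and> (\<forall>i\<ge>length bs. e i = 0)" "\<exists>e\<in>M. c e \<noteq> 0"
    using asm len unfolding nonconst_poly_def by auto
  have eq: "(\<lambda>t. mpoly_eval M c (map (\<lambda>\<alpha>. zgen \<alpha> t) \<alpha>s)) = (\<lambda>t. Qf bs M c (rho t))"
    unfolding Qf_def bs_def zgen_def by (simp add: comp_def)
  obtain r0 where r0: "r0 > 0" "\<forall>r. 0 < r \<and> r < r0 \<longrightarrow> Qf bs M c r \<noteq> 0"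
    using Qf_nonvanish[OF dist pos np(1) _ np(3)] np(2) by blast
  define L where "L = (\<Sum>e\<in>M. \<bar>c e\<bar>) * (\<Sum>i<length bs. 1 / bs!i)"
  have bsnn: "\<forall>i<length bs. 0 < bs!i" using pos by auto
  have L: "L \<ge> 0" unfolding L_def using bsnn by (intro mult_nonneg_nonneg sum_nonneg) auto
  have lin: "\<forall>r\<ge>0. \<bar>Qf bs M c r\<bar> \<le> L * r"
  proof (intro allI impI)
    fix r :: real assume r: "r \<ge> 0"
    have "\<bar>Qf bs M c r\<bar> \<le> (\<Sum>e\<in>M. \<bar>c e\<bar>) * (r * (\<Sum>i<length bs. 1 / bs!i))"
      by (rule Qf_small[OF pos np(2) r])
    then show "\<bar>Qf bs M c r\<bar> \<le> L * r" unfolding L_def by (simp add: algebra_simps)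
  qed
  have main: "(\<lambda>t. Qf bs M c (rho t)) \<in> nowhere_riemann_L1 \<and>
      \<not> (AE t in lebesgue_on {0..1}. Qf bs M c (rho t) = 0)"
    by (rule nowhere_main[OF Qf_measurable' Qf_cont r0(1) r0(2) small_from_lin[OF L lin]])
       (use Qf_bound in blast)
  show "\<not> (AE t in lebesgue_on {0..1}. mpoly_eval M c (map (\<lambda>\<alpha>. zgen \<alpha> t) \<alpha>s) = 0) \<and>
       (\<lambda>t. mpoly_eval M c (map (\<lambda>\<alpha>. zgen \<alpha> t) \<alpha>s)) \<in> nowhere_riemann_L1"
  proof -
    have pe: "mpoly_eval M c (map (\<lambda>\<alpha>. zgen \<alpha> t) \<alpha>s) = Qf bs M c (rho t)" for t
      using fun_cong[OF eq, of t] by simp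
    show ?thesis unfolding pe using main by simp
  qed
qed


end
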